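(* Let $a>1$ be an integer. If $n_1$ and $n_2$ are overpseudoprimes to base $a$ with $h_a(n_1)\neq h_a(n_2)$, then $\gcd(n_1,n_2)=1$.
   Context: For an integer $a>1$ and an odd integer $n>1$ with $\gcd(a,n)=1$: $h_a(n)$ denotes the multiplicative order of $a$ modulo $n$. A cyclotomic coset of $a$ modulo $n$ is a set of the form $\{\, s a^j \bmod n : j\ge 0\,\}$ with $s\in\{1,\dots,n-1\}$; these cosets partition $\{1,\dots,n-1\}$, and $r_a(n)$ denotes the number of distinct cyclotomic cosets of $a$ modulo $n$. An odd composite number $n$ coprime to $a$ is called an overpseudoprime to base $a$ if $n=r_a(n)\,h_a(n)+1$. *)

theory Defs
  imports "HOL-Number_Theory.Number_Theory"
begin

definition h_ord :: "nat \<Rightarrow> nat \<Rightarrow> nat" where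
  "h_ord a n = ord n a"

definition cyclotomic_coset :: "nat \<Rightarrow> nat \<Rightarrow> nat \<Rightarrow> nat set" where
  "cyclotomic_coset a n s = {s * a ^ j mod n | j. True}"

definition r_cos :: "nat \<Rightarrow> nat \<Rightarrow> nat" where
  "r_cos a n = card {cyclotomic_coset a n s | s. s \<in> {1..<n}}"

definition overpseudoprime :: "nat \<Rightarrow> nat \<Rightarrow> bool" where
  "overpseudoprime a n \<longleftrightarrow> odd n \<and> n > 1 \<and> \<not> prime n \<and> coprime a n \<and>
     n = r_cos a n * h_ord a n + 1"

end

theory Submission
  imports Defs
begin

lemma pow_mod_period:
  fixes a m k j :: nat
  assumes "[a ^ k = 1] (mod m)"
  shows "a ^ j mod m = a ^ (j mod k) mod m"
proof -
  have "(a ^ k) ^ (j div k) * a ^ (j mod k) = a ^ (k * (j div k) + j mod k)"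
    by (simp only: power_add power_mult)
  hence "a ^ j = (a ^ k) ^ (j div k) * a ^ (j mod k)"
    by simp
  moreover have "[(a ^ k) ^ (j div k) * a ^ (j mod k) = 1 ^ (j div k) * a ^ (j mod k)] (mod m)"
    using assms by (intro cong_mult cong_pow) auto
  ultimately show ?thesis by (simp add: cong_def)
qed

lemma coset_card_le_ord:
  fixes a n s :: nat
  assumes "coprime a n" "n > 1"
  shows "card (cyclotomic_coset a n s) \<le> ord n a"
proof -
  let ?k = "ord n a"
  have k: "[a ^ ?k = 1] (mod n)" by (rule ord)
  have "cyclotomic_coset a n s \<subseteq> (\<lambda>j. s * a ^ j mod n) ` {..<?k}"
  proof
    fix x assume "x \<in> cyclotomic_coset a n s"
    then obtain j where x: "x = s * a ^ j mod n" unfolding cyclotomic_coset_def by auto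
    have "x = s * (a ^ j mod n) mod n" using x by (simp add: mod_mult_right_eq)
    also have "\<dots> = s * (a ^ (j mod ?k) mod n) mod n" using pow_mod_period[OF k] by simp
    also have "\<dots> = s * a ^ (j mod ?k) mod n" by (simp add: mod_mult_right_eq)
    finally have "x = s * a ^ (j mod ?k) mod n" .
    moreover have "?k > 0" using assms by (simp add: coprime_commute)
    ultimately show "x \<in> (\<lambda>j. s * a ^ j mod n) ` {..<?k}" by auto
  qed
  hence "card (cyclotomic_coset a n s) \<le> card ((\<lambda>j. s * a ^ j mod n) ` {..<?k})"
    by (intro card_mono) auto
  also have "\<dots> \<le> ?k" using card_image_le[of "{..<?k}"] by simp
  finally show ?thesis .
qed

lemma coset_card_le_ord_p:
  fixes a n p :: nat
  assumes "coprime a n" "n > 1" "p dvd n" "p > 0"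
  shows "card (cyclotomic_coset a n (n div p)) \<le> ord p a"
proof -
  let ?k = "ord p a"
  let ?s = "n div p"
  have n: "n = ?s * p" using assms by simp
  have k: "[a ^ ?k = 1] (mod p)" by (rule ord)
  have "coprime a (?s * p)" using assms(1) n by simp
  hence "coprime a p" by simp
  hence cop: "coprime p a" by (simp add: coprime_commute)
  have "cyclotomic_coset a n ?s \<subseteq> (\<lambda>j. ?s * (a ^ j mod p)) ` {..<?k}"
  proof
    fix x assume "x \<in> cyclotomic_coset a n ?s"
    then obtain j where x: "x = ?s * a ^ j mod n" unfolding cyclotomic_coset_def by auto
    have "x = ?s * a ^ j mod (?s * p)" using x by (simp only: n[symmetric])
    also have "\<dots> = ?s * (a ^ j mod p)" by (rule mult_mod_right[symmetric])
    also have "\<dots> = ?s * (a ^ (j mod ?k) mod p)" using pow_mod_period[OF k] by simp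
    finally have "x = ?s * (a ^ (j mod ?k) mod p)" .
    moreover have "?k > 0" using cop by simp
    ultimately show "x \<in> (\<lambda>j. ?s * (a ^ j mod p)) ` {..<?k}" by auto
  qed
  hence "card (cyclotomic_coset a n ?s) \<le> card ((\<lambda>j. ?s * (a ^ j mod p)) ` {..<?k})"
    by (intro card_mono) auto
  also have "\<dots> \<le> ?k" using card_image_le[of "{..<?k}"] by simp
  finally show ?thesis .
qed

lemma coset_sub:
  fixes a n s :: nat
  assumes "coprime a n" "n > 1" "s \<in> {1..<n}"
  shows "cyclotomic_coset a n s \<subseteq> {1..<n}" "s \<in> cyclotomic_coset a n s"
proof -
  show "s \<in> cyclotomic_coset a n s" unfolding cyclotomic_coset_def
    using assms by (auto intro!: exI[of _ 0])
  show "cyclotomic_coset a n s \<subseteq> {1..<n}"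
  proof
    fix x assume "x \<in> cyclotomic_coset a n s"
    then obtain j where x: "x = s * a ^ j mod n" unfolding cyclotomic_coset_def by auto
    have "x < n" using x assms by simp
    moreover have "x \<noteq> 0"
    proof
      assume "x = 0"
      hence "n dvd s * a ^ j" using x by auto
      moreover have "coprime n (a ^ j)" using assms by (simp add: coprime_commute)
      ultimately have "n dvd s" using coprime_dvd_mult_left_iff by blast
      thus False using assms by (auto dest: dvd_imp_le)
    qed
    ultimately show "x \<in> {1..<n}" by auto
  qed
qed

lemma ovp_ord_prime:
  fixes a n p :: nat
  assumes "overpseudoprime a n" "prime p" "p dvd n"
  shows "ord p a = h_ord a n"
proof -
  from assms(1) have cop: "coprime a n" and n1: "n > 1"
    and eq: "n = r_cos a n * h_ord a n + 1" unfolding overpseudoprime_def by auto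
  let ?h = "h_ord a n"
  define U where "U = {cyclotomic_coset a n s | s. s \<in> {1..<n}}"
  have Ueq: "U = (\<lambda>s. cyclotomic_coset a n s) ` {1..<n}" unfolding U_def by auto
  have finU: "finite U" unfolding Ueq by simp
  have r: "card U = r_cos a n" unfolding U_def r_cos_def by simp
  have union: "\<Union>U = {1..<n}" unfolding Ueq using coset_sub[OF cop n1] by blast
  have le: "\<And>C. C \<in> U \<Longrightarrow> card C \<le> ?h"
    unfolding Ueq h_ord_def using coset_card_le_ord[OF cop n1] by auto
  have "n - 1 \<le> sum card U" using card_Union_le_sum_card[of U] union by simp
  have all: "\<forall>C\<in>U. card C = ?h"
  proof (rule ccontr)
    assume "\<not> ?thesis"
    then obtain C where "C \<in> U" "card C \<noteq> ?h" by auto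
    hence "card C < ?h" using le by fastforce
    hence "sum card U < sum (\<lambda>_. ?h) U"
      using \<open>C \<in> U\<close> le finU by (intro sum_strict_mono_ex1) auto
    also have "\<dots> = r_cos a n * ?h" using r by simp
    finally show False using \<open>n - 1 \<le> sum card U\<close> eq by linarith
  qed
  have p: "p > 1" using assms prime_gt_1_nat by blast
  have s: "n div p \<in> {1..<n}" using assms n1 p
    by (auto simp: div_greater_zero_iff dvd_imp_le intro!: div_less_dividend)
  hence "cyclotomic_coset a n (n div p) \<in> U" unfolding Ueq by auto
  hence "?h \<le> ord p a" using all coset_card_le_ord_p[OF cop n1 assms(3)] p by fastforce
  moreover have "ord p a \<le> ?h"
  proof -
    have "[a ^ ?h = 1] (mod n)" unfolding h_ord_def by (rule ord)
    hence "[a ^ ?h = 1] (mod p)" using assms(3) cong_dvd_modulus_nat by blast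
    hence "ord p a dvd ?h" using ord_divides by blast
    moreover have "?h > 0" using cop n1 unfolding h_ord_def by (simp add: coprime_commute)
    ultimately show ?thesis by (rule dvd_imp_le)
  qed
  ultimately show ?thesis by simp
qed

theorem corollary1:
  fixes a n1 n2 :: nat
  assumes "a > 1"
    and "overpseudoprime a n1" and "overpseudoprime a n2"
    and "h_ord a n1 \<noteq> h_ord a n2"
  shows "gcd n1 n2 = 1"
proof (rule ccontr)
  assume "gcd n1 n2 \<noteq> 1"
  then obtain p where p: "prime p" "p dvd gcd n1 n2" using prime_factor_nat[of "gcd n1 n2"] by blast
  have d1: "p dvd n1" using p(2) by (rule dvd_trans) simp
  have d2: "p dvd n2" using p(2) by (rule dvd_trans) simp
  have "ord p a = h_ord a n1" by (rule ovp_ord_prime[OF assms(2) p(1) d1])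
  moreover have "ord p a = h_ord a n2" by (rule ovp_ord_prime[OF assms(3) p(1) d2])
  ultimately show False using assms(4) by simp
qed

end
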